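(* Let $\mathcal{Q}$, $\mathcal{S}$, $p_1,\dots,p_4$ be as in the context. If $\mathcal{Q}$ has no base points in $\mathbb{P}^2(\mathbb{K})$, then $\gcd(p_1,p_2,p_3,p_4)=1$.
   Context: $\mathbb{K}$ is an algebraically closed field of characteristic zero and $\Sigma\subset\mathbb{P}^3(\mathbb{K})$ a surface. $\mathcal{Q}=(q_1:\cdots:q_4)$ is a rational parametrization of $\Sigma$ ($q_i\in\mathbb{K}[t_1,t_2,t_3]$ homogeneous of the same degree, $\gcd(q_1,\dots,q_4)=1$, image dense in $\Sigma$). $\mathcal{S}=(s_1:s_2:s_3):\mathbb{P}^2(\mathbb{K})\dashrightarrow\mathbb{P}^2(\mathbb{K})$ is a dominant rational map with $s_i$ homogeneous of the same degree and $\gcd(s_1,s_2,s_3)=1$. $p_i=q_i(s_1,s_2,s_3)$ for $i=1,\dots,4$. A base point of $\mathcal{Q}$ is a point $A\in\mathbb{P}^2(\mathbb{K})$ with $q_1(A)=\cdots=q_4(A)=0$. *)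

theory Defs
  imports "HOL-Computational_Algebra.Computational_Algebra"
begin

text \<open>Polynomials in K[t1,t2,t3] are represented as nested univariate polynomials
  ('a poly poly poly): the outermost variable is t3, the middle one t2, the innermost t1.
  Polynomials in K[x1,..,x4] are represented as 'a poly poly poly poly (outermost x4).
  Points of projective space are represented by nonzero coordinate vectors.\<close>

type_synonym 'a mpoly3 = "'a poly poly poly"
type_synonym 'a mpoly4 = "'a poly poly poly poly"

definition eval3 :: "'a::comm_ring_1 mpoly3 \<Rightarrow> 'a \<times> 'a \<times> 'a \<Rightarrow> 'a" where
  "eval3 q a = (case a of (a1, a2, a3) \<Rightarrow>
      poly (poly (poly q [:[:a3:]:]) [:a2:]) a1)"

definition eval4 :: "'a::comm_ring_1 mpoly4 \<Rightarrow> 'a \<times> 'a \<times> 'a \<times> 'a \<Rightarrow> 'a" where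
  "eval4 F y = (case y of (y1, y2, y3, y4) \<Rightarrow>
      poly (poly (poly (poly F [:[:[:y4:]:]:]) [:[:y3:]:]) [:y2:]) y1)"

text \<open>Homogeneous of total degree d (the zero polynomial is homogeneous of every degree).\<close>
definition hom3 :: "nat \<Rightarrow> 'a::zero mpoly3 \<Rightarrow> bool" where
  "hom3 d q \<longleftrightarrow> (\<forall>i j k. coeff (coeff (coeff q k) j) i \<noteq> 0 \<longrightarrow> i + j + k = d)"

definition hom4 :: "nat \<Rightarrow> 'a::zero mpoly4 \<Rightarrow> bool" where
  "hom4 d F \<longleftrightarrow> (\<forall>i j k l. coeff (coeff (coeff (coeff F l) k) j) i \<noteq> 0 \<longrightarrow> i + j + k + l = d)"

definition compose3 :: "'a::comm_ring_1 mpoly3 \<Rightarrow> 'a mpoly3 \<Rightarrow> 'a mpoly3 \<Rightarrow> 'a mpoly3 \<Rightarrow> 'a mpoly3" where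
  "compose3 q s1 s2 s3 =
     poly (map_poly (\<lambda>q2. poly (map_poly (\<lambda>q1. poly (map_poly (\<lambda>c. [:[:[:c:]:]:]) q1) s1) q2) s2) q) s3"

text \<open>A surface in P^3: the zero set of a nonconstant homogeneous polynomial
  (as a set of nonzero coordinate vectors, i.e. the punctured affine cone).\<close>
definition is_surface :: "('a::comm_ring_1 \<times> 'a \<times> 'a \<times> 'a) set \<Rightarrow> bool" where
  "is_surface \<Sigma> \<longleftrightarrow> (\<exists>F d. d \<ge> 1 \<and> F \<noteq> 0 \<and> hom4 d F \<and>
      \<Sigma> = {y. y \<noteq> (0, 0, 0, 0) \<and> eval4 F y = 0})"

definition image4 :: "'a::comm_ring_1 mpoly3 \<Rightarrow> 'a mpoly3 \<Rightarrow> 'a mpoly3 \<Rightarrow> 'a mpoly3 \<Rightarrow> ('a \<times> 'a \<times> 'a \<times> 'a) set" where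
  "image4 q1 q2 q3 q4 = {(eval3 q1 A, eval3 q2 A, eval3 q3 A, eval3 q4 A) | A.
      A \<noteq> (0, 0, 0) \<and> (eval3 q1 A, eval3 q2 A, eval3 q3 A, eval3 q4 A) \<noteq> (0, 0, 0, 0)}"

definition image3 :: "'a::comm_ring_1 mpoly3 \<Rightarrow> 'a mpoly3 \<Rightarrow> 'a mpoly3 \<Rightarrow> ('a \<times> 'a \<times> 'a) set" where
  "image3 s1 s2 s3 = {(eval3 s1 A, eval3 s2 A, eval3 s3 A) | A.
      A \<noteq> (0, 0, 0) \<and> (eval3 s1 A, eval3 s2 A, eval3 s3 A) \<noteq> (0, 0, 0)}"

text \<open>Zariski density of a set of points in a closed set of P^3 (closed sets are common zero
  sets of homogeneous polynomials).\<close>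
definition zariski_dense_in4 :: "('a::comm_ring_1 \<times> 'a \<times> 'a \<times> 'a) set \<Rightarrow> ('a \<times> 'a \<times> 'a \<times> 'a) set \<Rightarrow> bool" where
  "zariski_dense_in4 X \<Sigma> \<longleftrightarrow> X \<subseteq> \<Sigma> \<and>
     (\<forall>G d. hom4 d G \<longrightarrow> (\<forall>y\<in>X. eval4 G y = 0) \<longrightarrow> (\<forall>y\<in>\<Sigma>. eval4 G y = 0))"

text \<open>Dominant rational map P^2 --> P^2: its image is Zariski dense in P^2, i.e. no nonzero
  homogeneous polynomial vanishes on the whole image.\<close>
definition dominant3 :: "'a::comm_ring_1 mpoly3 \<Rightarrow> 'a mpoly3 \<Rightarrow> 'a mpoly3 \<Rightarrow> bool" where
  "dominant3 s1 s2 s3 \<longleftrightarrow>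
     (\<forall>G d. hom3 d G \<longrightarrow> G \<noteq> 0 \<longrightarrow> (\<exists>x\<in>image3 s1 s2 s3. eval3 G x \<noteq> 0))"

definition base_point :: "'a::comm_ring_1 mpoly3 \<Rightarrow> 'a mpoly3 \<Rightarrow> 'a mpoly3 \<Rightarrow> 'a mpoly3 \<Rightarrow> 'a \<times> 'a \<times> 'a \<Rightarrow> bool" where
  "base_point q1 q2 q3 q4 A \<longleftrightarrow> A \<noteq> (0, 0, 0) \<and>
     eval3 q1 A = 0 \<and> eval3 q2 A = 0 \<and> eval3 q3 A = 0 \<and> eval3 q4 A = 0"

end

theory Submission imports Defs "HOL-Computational_Algebra.Field_as_Ring" begin

instantiation fract :: (idom)
  "{unique_euclidean_ring, normalization_euclidean_semiring, normalization_semidom_multiplicative}"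
begin
definition [simp]: "normalize_fract = (normalize_field :: 'a fract \<Rightarrow> _)"
definition [simp]: "unit_factor_fract = (unit_factor_field :: 'a fract \<Rightarrow> _)"
definition [simp]: "modulo_fract = (mod_field :: 'a fract \<Rightarrow> _)"
definition [simp]: "euclidean_size_fract = (euclidean_size_field :: 'a fract \<Rightarrow> _)"
definition [simp]: "division_segment (x :: 'a fract) = 1"
instance
  by standard
    (simp_all add: dvd_field_iff field_split_simps split: if_splits)
end

instantiation fract :: (idom) euclidean_ring_gcd
begin
definition gcd_fract :: "'a fract \<Rightarrow> 'a fract \<Rightarrow> 'a fract" where
  "gcd_fract = Euclidean_Algorithm.gcd"
definition lcm_fract :: "'a fract \<Rightarrow> 'a fract \<Rightarrow> 'a fract" where
  "lcm_fract = Euclidean_Algorithm.lcm"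
definition Gcd_fract :: "'a fract set \<Rightarrow> 'a fract" where
 "Gcd_fract = Euclidean_Algorithm.Gcd"
definition Lcm_fract :: "'a fract set \<Rightarrow> 'a fract" where
 "Lcm_fract = Euclidean_Algorithm.Lcm"
instance by standard (simp_all add: gcd_fract_def lcm_fract_def Gcd_fract_def Lcm_fract_def)
end

instance fract :: (idom) field_gcd ..


lemma bez_field:
  fixes p q :: "'b::field_gcd poly"
  assumes "irreducible p" "\<not> p dvd q"
  shows "\<exists>a b. a * p + b * q = 1"
proof -
  have "prime_elem p" using assms(1) by (simp add: irreducible_imp_prime_elem)
  then have "coprime p q" using assms(2) by (rule prime_elem_imp_coprime)
  then have "gcd p q = 1" by simp
  obtain x y where "bezout_coefficients p q = (x, y)" by (cases "bezout_coefficients p q")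
  from bezout_coefficients[OF this] \<open>gcd p q = 1\<close> show ?thesis by metis
qed

lemma clear_denoms:
  fixes P :: "'r::idom fract poly"
  shows "\<exists>d P'. d \<noteq> 0 \<and> smult (to_fract d) P = fract_poly P'"
proof (induction P)
  case 0
  show ?case by (rule exI[of _ 1], rule exI[of _ 0]) simp
next
  case (pCons c P)
  then obtain d0 P0 where d0: "d0 \<noteq> 0" "smult (to_fract d0) P = fract_poly P0" by blast
  obtain n m where c: "c = Fract n m" "m \<noteq> 0" by (cases c)
  have e1: "to_fract (d0 * m) * c = to_fract (n * d0)"
    using c by (simp add: Fract_conv_to_fract field_simps)
  have e2: "smult (to_fract (d0 * m)) P = smult (to_fract m) (fract_poly P0)"
    using d0(2) by (metis smult_smult mult.commute to_fract_mult)
  have "smult (to_fract (d0 * m)) (pCons c P) = fract_poly (pCons (n * d0) (smult m P0))"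
    using e1 e2 by (simp add: map_poly_pCons map_poly_smult del: to_fract_mult)
  moreover have "d0 * m \<noteq> 0" using d0 c by simp
  ultimately show ?case by blast
qed

lemma bez_R:
  fixes h g :: "'r::{factorial_ring_gcd,semiring_gcd_mult_normalize} poly"
  assumes "irreducible h" "degree h > 0" "\<not> h dvd g"
  shows "\<exists>a b r. r \<noteq> 0 \<and> a * h + b * g = [:r:]"
proof -
  have irr: "irreducible (fract_poly h)" and ct: "content h = 1"
    using nonconst_poly_irreducible_iff[of h] assms by auto
  have nd: "\<not> fract_poly h dvd fract_poly g"
    using fract_poly_dvdD[OF _ ct] assms(3) by blast
  obtain A B where AB: "A * fract_poly h + B * fract_poly g = 1"
    using bez_field[OF irr nd] by blast
  obtain dA a where a: "dA \<noteq> 0" "smult (to_fract dA) A = fract_poly a"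
    using clear_denoms by blast
  obtain dB b where b: "dB \<noteq> 0" "smult (to_fract dB) B = fract_poly b"
    using clear_denoms by blast
  have "fract_poly (smult dB a * h + smult dA b * g)
      = smult (to_fract dB) (smult (to_fract dA) A) * fract_poly h
        + smult (to_fract dA) (smult (to_fract dB) B) * fract_poly g"
    by (simp add: a(2) b(2) map_poly_smult)
  also have "\<dots> = smult (to_fract (dA * dB)) (A * fract_poly h + B * fract_poly g)"
    by (simp add: algebra_simps smult_add_right)
  also have "\<dots> = fract_poly [:dA * dB:]" using AB by (simp add: map_poly_pCons)
  finally have "smult dB a * h + smult dA b * g = [:dA * dB:]"
    by (simp only: fract_poly_eq_iff)
  moreover have "dA * dB \<noteq> 0" using a b by simp
  ultimately show ?thesis by blast
qed

definition rhom :: "('b::comm_ring_1 \<Rightarrow> 'c::comm_ring_1) \<Rightarrow> bool" where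
  "rhom f \<longleftrightarrow> f 0 = 0 \<and> f 1 = 1 \<and> (\<forall>x y. f (x + y) = f x + f y) \<and> (\<forall>x y. f (x * y) = f x * f y)"

definition peval :: "('b::zero \<Rightarrow> 'c::comm_semiring_1) \<Rightarrow> 'b poly \<Rightarrow> 'c \<Rightarrow> 'c" where
  "peval f p x = poly (map_poly f p) x"

lemma peval_0[simp]: "peval f 0 x = 0"
  by (simp add: peval_def)

lemma peval_pCons: "f 0 = 0 \<Longrightarrow> peval f (pCons a p) x = f a + x * peval f p x"
  by (simp add: peval_def map_poly_pCons)

lemma peval_const: "f 0 = 0 \<Longrightarrow> peval f [:c:] x = f c"
  by (simp add: peval_pCons)

lemma peval_add:
  assumes "rhom f" shows "peval f (p + q) x = peval f p x + peval f q x"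
proof (induction p q rule: poly_induct2)
  case 0
  then show ?case by simp
next
  case (pCons a p b q)
  then show ?case using assms by (simp add: peval_pCons rhom_def algebra_simps)
qed

lemma peval_smult:
  assumes "rhom f" shows "peval f (smult a p) x = f a * peval f p x"
  by (induction p) (use assms in \<open>simp_all add: peval_pCons rhom_def algebra_simps\<close>)

lemma peval_mult:
  assumes "rhom f" shows "peval f (p * q) x = peval f p x * peval f q x"
proof (induction p)
  case 0
  then show ?case by simp
next
  case (pCons a p)
  have f0: "f 0 = 0" using assms by (simp add: rhom_def)
  have "peval f (pCons a p * q) x = peval f (smult a q + pCons 0 (p * q)) x" by simp
  also have "\<dots> = f a * peval f q x + (f 0 + x * peval f (p * q) x)"
    by (simp only: peval_add[OF assms] peval_smult[OF assms] peval_pCons[of f, OF f0])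
  finally have "peval f (pCons a p * q) x = f a * peval f q x + (f 0 + x * peval f (p * q) x)" .
  then show ?case using pCons f0 by (simp add: peval_pCons algebra_simps)
qed

lemma rhom_peval: "rhom f \<Longrightarrow> rhom (\<lambda>p. peval f p x)"
  unfolding rhom_def[of "\<lambda>p. peval f p x"]
  using peval_add[of f] peval_mult[of f] peval_const[of f "1"]
  by (auto simp: rhom_def one_pCons)

lemma rhom_poly: "rhom (\<lambda>p. poly p x)"
  by (simp add: rhom_def)

lemma rhom_comp: "rhom f \<Longrightarrow> rhom g \<Longrightarrow> rhom (\<lambda>x. f (g x))"
  by (simp add: rhom_def)

lemma rhom_poly_eval:
  assumes "rhom \<phi>" shows "\<phi> (poly p c) = peval \<phi> p (\<phi> c)"
  by (induction p) (use assms in \<open>simp_all add: rhom_def peval_pCons\<close>)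

lemma peval_map:
  "f 0 = 0 \<Longrightarrow> g 0 = 0 \<Longrightarrow> peval f (map_poly g p) x = peval (\<lambda>y. f (g y)) p x"
  by (simp add: peval_def map_poly_map_poly o_def)

lemma peval_id[simp]: "peval (\<lambda>y. y) p x = poly p x"
  by (simp add: peval_def)

lemma rhom_minus: "rhom f \<Longrightarrow> f (- x) = - f x"
  unfolding rhom_def by (metis add.right_inverse add_eq_0_iff)

definition lift :: "('r::zero \<Rightarrow> 'p \<Rightarrow> 'a::comm_semiring_1) \<Rightarrow> 'r poly \<Rightarrow> 'p \<times> 'a \<Rightarrow> 'a" where
  "lift ev p P = peval (\<lambda>c. ev c (fst P)) p (snd P)"

definition NS :: "('r::{factorial_ring_gcd,semiring_gcd_mult_normalize} \<Rightarrow> 'p \<Rightarrow> 'a::field) \<Rightarrow> bool" where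
  "NS ev \<longleftrightarrow> (\<forall>A. rhom (\<lambda>x. ev x A)) \<and> (\<forall>x. x \<noteq> 0 \<longrightarrow> (\<exists>A. ev x A \<noteq> 0)) \<and>
     (\<forall>h g. irreducible h \<longrightarrow> (\<forall>A. ev h A = 0 \<longrightarrow> ev g A = 0) \<longrightarrow> h dvd g)"

lemma NS_lift:
  fixes ev :: "'r::{factorial_ring_gcd,semiring_gcd_mult_normalize} \<Rightarrow> 'p \<Rightarrow> 'a::field_char_0"
  assumes ac: "\<forall>f :: 'a poly. degree f > 0 \<longrightarrow> (\<exists>x. poly f x = 0)" and ns: "NS ev"
  shows "NS (lift ev)"
proof -
  have hom: "rhom (\<lambda>x. ev x A)" for A using ns by (simp add: NS_def)
  have f0: "ev 0 A = 0" for A using hom[of A] by (simp add: rhom_def)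
  have nv: "x \<noteq> 0 \<Longrightarrow> \<exists>A. ev x A \<noteq> 0" for x using ns by (simp add: NS_def)
  have nsd: "irreducible h \<Longrightarrow> (\<forall>A. ev h A = 0 \<longrightarrow> ev g A = 0) \<Longrightarrow> h dvd g" for h g
    using ns by (simp add: NS_def)
  have lhom: "rhom (\<lambda>x. lift ev x P)" for P
    unfolding lift_def by (rule rhom_peval[OF hom])
  have lconst: "lift ev [:c:] (A, x) = ev c A" for c A x
    by (simp add: lift_def peval_const f0)
  have allz: "ev (coeff p n) A = 0" if "\<forall>x. lift ev p (A, x) = 0" for p n A
  proof -
    have "map_poly (\<lambda>c. ev c A) p = 0"
      using that poly_all_0_iff_0 by (auto simp: lift_def peval_def)
    then have "coeff (map_poly (\<lambda>c. ev c A) p) n = 0" by simp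
    then show ?thesis by (simp add: coeff_map_poly f0)
  qed
  have nv2: "\<exists>P. lift ev p P \<noteq> 0" if p0: "p \<noteq> 0" for p
  proof -
    obtain A where A: "ev (lead_coeff p) A \<noteq> 0" using nv[of "lead_coeff p"] p0 by auto
    have "\<not> (\<forall>x. lift ev p (A, x) = 0)"
      using allz[of p A "degree p"] A by blast
    then show ?thesis by blast
  qed
  have ns2: "h dvd g" if irr: "irreducible h" and van: "\<forall>P. lift ev h P = 0 \<longrightarrow> lift ev g P = 0" for h g
  proof (cases "degree h = 0")
    case True
    define c where "c = coeff h 0"
    have hc: "h = [:c:]" using degree_0_id[OF True] by (simp add: c_def)
    have irrc: "irreducible c" using irr hc irreducible_const_poly_iff by metis
    have "c dvd coeff g n" for n
    proof (rule nsd[OF irrc], intro allI impI)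
      fix A assume "ev c A = 0"
      then have "\<forall>x. lift ev g (A, x) = 0" using van hc lconst by metis
      then show "ev (coeff g n) A = 0" by (rule allz)
    qed
    then show ?thesis using hc const_poly_dvd_iff by metis
  next
    case False
    show ?thesis
    proof (rule ccontr)
      assume nd: "\<not> h dvd g"
      obtain a b r where abr: "r \<noteq> 0" "a * h + b * g = [:r:]"
        using bez_R[OF irr _ nd] False by blast
      have "h \<noteq> 0" using irr by auto
      then have "r * lead_coeff h \<noteq> 0" using abr by simp
      then obtain A where A: "ev (r * lead_coeff h) A \<noteq> 0" using nv by blast
      have Ar: "ev r A \<noteq> 0" and Ah: "ev (lead_coeff h) A \<noteq> 0"
        using A hom[of A] by (auto simp: rhom_def)
      have "degree (map_poly (\<lambda>c. ev c A) h) = degree h"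
        using Ah by (rule map_poly_degree_eq)
      then have "0 < degree (map_poly (\<lambda>c. ev c A) h)" using False by simp
      then obtain x where x: "poly (map_poly (\<lambda>c. ev c A) h) x = 0"
        using ac by blast
      then have hx: "lift ev h (A, x) = 0" by (simp add: lift_def peval_def)
      then have gx: "lift ev g (A, x) = 0" using van by blast
      have "lift ev (a * h + b * g) (A, x) = 0"
        using lhom[of "(A, x)"] hx gx by (simp add: rhom_def)
      then show False using abr Ar lconst by simp
    qed
  qed
  show ?thesis unfolding NS_def using lhom nv2 ns2 by blast
qed

definition ev0 :: "'a::field \<Rightarrow> unit \<Rightarrow> 'a" where "ev0 c u = c"

lemma NS_ev0: "NS (ev0 :: 'a::field_gcd \<Rightarrow> unit \<Rightarrow> 'a)"
proof -
  have "\<not> irreducible (h::'a)" for h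
    by (cases "h = 0") (auto simp: irreducible_def dvd_field_iff)
  then show ?thesis by (auto simp: NS_def ev0_def rhom_def)
qed

definition ev3 :: "'a::field_gcd mpoly3 \<Rightarrow> ((unit \<times> 'a) \<times> 'a) \<times> 'a \<Rightarrow> 'a" where
  "ev3 = lift (lift (lift ev0))"

lemma NS_ev3:
  assumes ac: "\<forall>f :: 'a poly. degree f > 0 \<longrightarrow> (\<exists>x. poly f x = 0)"
  shows "NS (ev3 :: 'a::{field_char_0,field_gcd} mpoly3 \<Rightarrow> _)"
  unfolding ev3_def by (intro NS_lift[OF ac] NS_ev0)

lemma lift1: "lift ev0 d ((), b) = poly d b"
  by (simp add: lift_def ev0_def)

lemma lift2: "lift (lift ev0) c (((), b1), b2) = peval (\<lambda>d. poly d b1) c b2"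
  by (simp add: lift_def[of "lift ev0"] lift1)

lemma ev3_eq: "ev3 q ((((), b1), b2), b3) = peval (\<lambda>c. peval (\<lambda>d. poly d b1) c b2) q b3"
  by (simp add: ev3_def lift_def[of "lift (lift ev0)"] lift2)

lemma eval3_ev3: "eval3 (q :: 'a::field_gcd mpoly3) (a1, a2, a3) = ev3 q ((((), a1), a2), a3)"
proof -
  define \<psi>1 where "\<psi>1 = (\<lambda>d::'a poly. poly d a1)"
  define \<psi>2 where "\<psi>2 = (\<lambda>c::'a poly poly. \<psi>1 (poly c [:a2:]))"
  have h1: "rhom \<psi>1" unfolding \<psi>1_def by (rule rhom_poly)
  have h2: "rhom \<psi>2" unfolding \<psi>2_def by (rule rhom_comp[OF h1 rhom_poly])
  have e2: "\<psi>2 c = peval (\<lambda>d. poly d a1) c a2" for c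
    unfolding \<psi>2_def rhom_poly_eval[OF h1] by (simp add: \<psi>1_def)
  have "eval3 q (a1, a2, a3) = \<psi>2 (poly q [:[:a3:]:])"
    by (simp add: eval3_def \<psi>2_def \<psi>1_def)
  also have "\<dots> = peval \<psi>2 q (\<psi>2 [:[:a3:]:])" by (rule rhom_poly_eval[OF h2])
  also have "\<psi>2 [:[:a3:]:] = a3" by (simp add: \<psi>2_def \<psi>1_def)
  finally show ?thesis using e2 by (simp add: ev3_eq)
qed

lemma ev3_const: "ev3 [:[:[:c:]:]:] P = c"
  by (simp add: ev3_def lift_def peval_const ev0_def)

lemma ev3_compose3:
  assumes ac: "\<forall>f :: 'a poly. degree f > 0 \<longrightarrow> (\<exists>x. poly f x = 0)"
  shows "ev3 (compose3 (q::'a::{field_char_0,field_gcd} mpoly3) s1 s2 s3) P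
     = eval3 q (ev3 s1 P, ev3 s2 P, ev3 s3 P)"
proof -
  define \<phi> where "\<phi> = (\<lambda>x. ev3 x P)"
  have h: "rhom \<phi>" unfolding \<phi>_def using NS_ev3[OF ac] unfolding NS_def by blast
  have f0: "\<phi> 0 = 0" using h by (simp add: rhom_def)
  define C where "C = (\<lambda>c::'a. [:[:[:c:]:]:])"
  define G where "G = (\<lambda>q1. poly (map_poly C q1) s1)"
  define F where "F = (\<lambda>q2. poly (map_poly G q2) s2)"
  have C0: "C 0 = 0" and G0: "G 0 = 0" and F0: "F 0 = 0" by (simp_all add: C_def G_def F_def)
  have "compose3 q s1 s2 s3 = poly (map_poly F q) s3"
    by (simp add: compose3_def F_def G_def C_def)
  then have "\<phi> (compose3 q s1 s2 s3) = peval (\<lambda>y. \<phi> (F y)) q (\<phi> s3)"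
    by (simp add: rhom_poly_eval[OF h] peval_map[of \<phi> F, OF f0 F0])
  also have "(\<lambda>y. \<phi> (F y)) = (\<lambda>y. peval (\<lambda>z. \<phi> (G z)) y (\<phi> s2))"
    by (simp add: F_def rhom_poly_eval[OF h] peval_map[of \<phi> G, OF f0 G0])
  also have "(\<lambda>z. \<phi> (G z)) = (\<lambda>z. poly z (\<phi> s1))"
  proof -
    have "\<phi> (G z) = poly z (\<phi> s1)" for z
    proof -
      have "\<phi> (G z) = peval (\<lambda>y. \<phi> (C y)) z (\<phi> s1)"
        by (simp only: G_def rhom_poly_eval[OF h] peval_map[of \<phi> C, OF f0 C0])
      also have "(\<lambda>y. \<phi> (C y)) = (\<lambda>y. y)" by (simp add: \<phi>_def C_def ev3_const)
      finally show ?thesis by simp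
    qed
    then show ?thesis by simp
  qed
  finally show ?thesis by (simp add: \<phi>_def eval3_ev3 ev3_eq)
qed



theorem theorem4p4:
  fixes q1 q2 q3 q4 s1 s2 s3 :: "'a::{field_char_0, field_gcd} mpoly3"
    and \<Sigma> :: "('a \<times> 'a \<times> 'a \<times> 'a) set"
  assumes alg_closed: "\<forall>f :: 'a poly. degree f > 0 \<longrightarrow> (\<exists>x. poly f x = 0)"
    and surface: "is_surface \<Sigma>"
    and q_hom: "\<exists>d. hom3 d q1 \<and> hom3 d q2 \<and> hom3 d q3 \<and> hom3 d q4"
    and q_gcd: "gcd (gcd (gcd q1 q2) q3) q4 = 1"
    and q_dense: "zariski_dense_in4 (image4 q1 q2 q3 q4) \<Sigma>"
    and s_hom: "\<exists>e. hom3 e s1 \<and> hom3 e s2 \<and> hom3 e s3"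
    and s_gcd: "gcd (gcd s1 s2) s3 = 1"
    and s_dom: "dominant3 s1 s2 s3"
    and no_base: "\<not> (\<exists>A. base_point q1 q2 q3 q4 A)"
  shows "gcd (gcd (gcd (compose3 q1 s1 s2 s3) (compose3 q2 s1 s2 s3))
               (compose3 q3 s1 s2 s3)) (compose3 q4 s1 s2 s3) = 1"
proof -
  define p1 where "p1 = compose3 q1 s1 s2 s3"
  define p2 where "p2 = compose3 q2 s1 s2 s3"
  define p3 where "p3 = compose3 q3 s1 s2 s3"
  define p4 where "p4 = compose3 q4 s1 s2 s3"
  define G where "G = gcd (gcd (gcd p1 p2) p3) p4"
  have comp: "ev3 (compose3 q s1 s2 s3) A = eval3 q (ev3 s1 A, ev3 s2 A, ev3 s3 A)" for q A
    by (rule ev3_compose3[OF alg_closed])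
  have ns: "NS (ev3 :: 'a mpoly3 \<Rightarrow> _)" by (rule NS_ev3[OF alg_closed])
  have hom: "rhom (\<lambda>x::'a mpoly3. ev3 x A)" for A using ns unfolding NS_def by blast
  have key: "ev3 s1 A = 0 \<and> ev3 s2 A = 0 \<and> ev3 s3 A = 0"
    if "ev3 p1 A = 0" "ev3 p2 A = 0" "ev3 p3 A = 0" "ev3 p4 A = 0" for A
  proof (rule ccontr)
    assume "\<not> ?thesis"
    then have "base_point q1 q2 q3 q4 (ev3 s1 A, ev3 s2 A, ev3 s3 A)"
      using that comp unfolding base_point_def p1_def p2_def p3_def p4_def by auto
    then show False using no_base by blast
  qed
  show ?thesis unfolding G_def[symmetric, unfolded p1_def p2_def p3_def p4_def]
  proof (rule ccontr)
    assume G1: "G \<noteq> 1"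
    show False
    proof (cases "G = 0")
      case True
      then have "p1 = 0" "p2 = 0" "p3 = 0" "p4 = 0" by (simp_all add: G_def)
      then have z: "ev3 s1 A = 0 \<and> ev3 s2 A = 0 \<and> ev3 s3 A = 0" for A
        using key hom[of A] by (simp add: rhom_def)
      have "hom3 0 (1 :: 'a mpoly3)" by (simp add: hom3_def coeff_1)
      then obtain x where "x \<in> image3 s1 s2 s3" using s_dom unfolding dominant3_def
        by (metis one_neq_zero)
      then obtain a1 a2 a3 where "(eval3 s1 (a1, a2, a3), eval3 s2 (a1, a2, a3), eval3 s3 (a1, a2, a3)) \<noteq> (0, 0, 0)"
        unfolding image3_def by auto
      then show False using z[of "((((), a1), a2), a3)"] by (simp add: eval3_ev3)
    next
      case False
      have "normalize G = G" by (simp add: G_def)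
      then have "\<not> is_unit G" using G1 by (metis is_unit_normalize)
      then obtain h where h: "h dvd G" "prime h" using prime_divisor_exists False by blast
      have hd: "h dvd p1" "h dvd p2" "h dvd p3" "h dvd p4"
        using h(1) unfolding G_def by (meson dvd_trans gcd_dvd1 gcd_dvd2)+
      have irr: "irreducible h" using h(2) by (simp add: prime_elem_imp_irreducible)
      have ev_dvd: "ev3 h A = 0 \<Longrightarrow> h dvd p \<Longrightarrow> ev3 p A = 0" for p A
        using hom[of A] by (auto simp: rhom_def elim!: dvdE)
      have z: "ev3 h A = 0 \<longrightarrow> ev3 s1 A = 0 \<and> ev3 s2 A = 0 \<and> ev3 s3 A = 0" for A
        using key ev_dvd hd by blast
      have nsd: "irreducible h \<Longrightarrow> (\<forall>A. ev3 h A = 0 \<longrightarrow> ev3 g A = 0) \<Longrightarrow> h dvd g" for g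
        using ns unfolding NS_def by blast
      have "h dvd s1" "h dvd s2" "h dvd s3" using nsd[OF irr] z by blast+
      then have "h dvd gcd (gcd s1 s2) s3" by simp
      then have "is_unit h" using s_gcd by simp
      then show False using h(2) by simp
    qed
  qed
qed

end
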